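(* Let $p\ge 2$ and $\varphi\in\mathbb{C}^{p-1}\setminus\Omega_1$. Then the Lie algebra $\operatorname{Der}(F_\varphi)$ is solvable of derived length $3$ and is complete, i.e. it has trivial center and every derivation of it is inner. Moreover, for any $\varphi,\varphi'\in\mathbb{C}^{p-1}\setminus\Omega_1$ one has $\operatorname{Der}(F_\varphi)\cong\operatorname{Der}(F_{\varphi'})$.
   Context: Let $p\ge 2$ and $\varphi=(\varphi_1,\dots,\varphi_{p-1})\in\mathbb{C}^{p-1}$. $F_\varphi$ denotes the $2p$-dimensional complex Lie algebra with basis $X_1,\dots,X_{2p}$ whose nonzero brackets (up to antisymmetry) are $[X_1,X_2]=X_1$, $[X_2,X_{2k+1}]=\varphi_kX_{2k+1}$, $[X_2,X_{2k+2}]=-(1+\varphi_k)X_{2k+2}$, $[X_{2k+1},X_{2k+2}]=X_1$ for $1\le k\le p-1$. $\Omega_1\subset\mathbb{C}^{p-1}$ is the union of the hyperplanes $\{1+\varphi_i+\varphi_j=0\}$, $\{2+\varphi_i+\varphi_j=0\}$ ($1\le i,j\le p-1$), $\{\varphi_i-\varphi_j=0\}$ ($1\le i\ne j\le p-1$), $\{\varphi_i=0\}$, $\{\varphi_i+1=0\}$, $\{2\varphi_i+1=0\}$ ($1\le i\le p-1$). $\operatorname{Der}(\mathfrak g)$ is the Lie algebra of derivations of $\mathfrak g$ with the commutator bracket. *)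

theory Defs
  imports Complex_Main "HOL-Library.Function_Algebras"
begin

text \<open>A complex Lie algebra is presented by a carrier set L inside an additive group 'a,
  a bracket br and a complex scalar multiplication sc.\<close>

definition cspan :: "(complex \<Rightarrow> 'a::ab_group_add \<Rightarrow> 'a) \<Rightarrow> 'a set \<Rightarrow> 'a set" where
  "cspan sc S = {x. \<exists>(n::nat) c v. (\<forall>i<n. v i \<in> S) \<and> x = (\<Sum>i<n. sc (c i) (v i))}"

fun derived_series ::
  "'a::ab_group_add set \<Rightarrow> ('a \<Rightarrow> 'a \<Rightarrow> 'a) \<Rightarrow> (complex \<Rightarrow> 'a \<Rightarrow> 'a) \<Rightarrow> nat \<Rightarrow> 'a set" where
  "derived_series L br sc 0 = L"
| "derived_series L br sc (Suc k) =
     cspan sc {br x y | x y. x \<in> derived_series L br sc k \<and> y \<in> derived_series L br sc k}"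

text \<open>Solvable of derived length exactly k (k \<ge> 1).\<close>
definition has_derived_length ::
  "'a::ab_group_add set \<Rightarrow> ('a \<Rightarrow> 'a \<Rightarrow> 'a) \<Rightarrow> (complex \<Rightarrow> 'a \<Rightarrow> 'a) \<Rightarrow> nat \<Rightarrow> bool" where
  "has_derived_length L br sc k \<longleftrightarrow>
     derived_series L br sc k = {0} \<and> derived_series L br sc (k - 1) \<noteq> {0}"

definition lie_center :: "'a::ab_group_add set \<Rightarrow> ('a \<Rightarrow> 'a \<Rightarrow> 'a) \<Rightarrow> 'a set" where
  "lie_center L br = {z \<in> L. \<forall>x\<in>L. br z x = 0}"

text \<open>Derivations of (L, br), represented extensionally (value 0 outside L).\<close>
definition derivations ::
  "'a::ab_group_add set \<Rightarrow> ('a \<Rightarrow> 'a \<Rightarrow> 'a) \<Rightarrow> (complex \<Rightarrow> 'a \<Rightarrow> 'a) \<Rightarrow> ('a \<Rightarrow> 'a) set" where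
  "derivations L br sc = {d.
      (\<forall>x\<in>L. d x \<in> L)
    \<and> (\<forall>x\<in>L. \<forall>y\<in>L. d (x + y) = d x + d y)
    \<and> (\<forall>c. \<forall>x\<in>L. d (sc c x) = sc c (d x))
    \<and> (\<forall>x\<in>L. \<forall>y\<in>L. d (br x y) = br (d x) y + br x (d y))
    \<and> (\<forall>x. x \<notin> L \<longrightarrow> d x = 0)}"

definition inner_derivation :: "'a::ab_group_add set \<Rightarrow> ('a \<Rightarrow> 'a \<Rightarrow> 'a) \<Rightarrow> 'a \<Rightarrow> ('a \<Rightarrow> 'a)" where
  "inner_derivation L br a = (\<lambda>x. if x \<in> L then br a x else 0)"

definition complete_lie ::
  "'a::ab_group_add set \<Rightarrow> ('a \<Rightarrow> 'a \<Rightarrow> 'a) \<Rightarrow> (complex \<Rightarrow> 'a \<Rightarrow> 'a) \<Rightarrow> bool" where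
  "complete_lie L br sc \<longleftrightarrow>
     lie_center L br = {0} \<and>
     (\<forall>d\<in>derivations L br sc. \<exists>a\<in>L. d = inner_derivation L br a)"

definition lie_isomorphic ::
  "'a::ab_group_add set \<Rightarrow> ('a \<Rightarrow> 'a \<Rightarrow> 'a) \<Rightarrow> (complex \<Rightarrow> 'a \<Rightarrow> 'a) \<Rightarrow>
   'b::ab_group_add set \<Rightarrow> ('b \<Rightarrow> 'b \<Rightarrow> 'b) \<Rightarrow> (complex \<Rightarrow> 'b \<Rightarrow> 'b) \<Rightarrow> bool" where
  "lie_isomorphic L1 br1 sc1 L2 br2 sc2 \<longleftrightarrow>
     (\<exists>f. bij_betw f L1 L2
        \<and> (\<forall>x\<in>L1. \<forall>y\<in>L1. f (x + y) = f x + f y)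
        \<and> (\<forall>c. \<forall>x\<in>L1. f (sc1 c x) = sc2 c (f x))
        \<and> (\<forall>x\<in>L1. \<forall>y\<in>L1. f (br1 x y) = br2 (f x) (f y)))"

definition comm_bracket :: "('a::ab_group_add \<Rightarrow> 'a) \<Rightarrow> ('a \<Rightarrow> 'a) \<Rightarrow> ('a \<Rightarrow> 'a)" where
  "comm_bracket d e = (\<lambda>x. d (e x) - e (d x))"

definition fun_sc :: "(complex \<Rightarrow> 'a \<Rightarrow> 'a) \<Rightarrow> complex \<Rightarrow> ('a \<Rightarrow> 'a) \<Rightarrow> ('a \<Rightarrow> 'a)" where
  "fun_sc sc c d = (\<lambda>x. sc c (d x))"

text \<open>Vectors of C^(2p) are functions nat => complex supported on {1..2p};
  X_i is the i-th unit vector. phi k is meaningful for 1 <= k <= p-1.\<close>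

definition vsc :: "complex \<Rightarrow> (nat \<Rightarrow> complex) \<Rightarrow> (nat \<Rightarrow> complex)" where
  "vsc c v = (\<lambda>i. c * v i)"

definition Fcarrier :: "nat \<Rightarrow> (nat \<Rightarrow> complex) set" where
  "Fcarrier p = {x. \<forall>i. i \<notin> {1..2*p} \<longrightarrow> x i = 0}"

definition unitv :: "nat \<Rightarrow> nat \<Rightarrow> complex" where
  "unitv k = (\<lambda>i. if i = k then 1 else 0)"

text \<open>[X_i, X_j] for i < j.\<close>
definition Fupper :: "nat \<Rightarrow> (nat \<Rightarrow> complex) \<Rightarrow> nat \<Rightarrow> nat \<Rightarrow> (nat \<Rightarrow> complex)" where
  "Fupper p \<phi> i j =
     (if i = 1 \<and> j = 2 then unitv 1
      else if i = 2 \<and> (\<exists>k\<in>{1..p-1}. j = 2*k+1) then vsc (\<phi> ((j - 1) div 2)) (unitv j)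
      else if i = 2 \<and> (\<exists>k\<in>{1..p-1}. j = 2*k+2) then vsc (- (1 + \<phi> ((j - 2) div 2))) (unitv j)
      else if (\<exists>k\<in>{1..p-1}. i = 2*k+1 \<and> j = 2*k+2) then unitv 1
      else 0)"

definition Fbasis_bracket :: "nat \<Rightarrow> (nat \<Rightarrow> complex) \<Rightarrow> nat \<Rightarrow> nat \<Rightarrow> (nat \<Rightarrow> complex)" where
  "Fbasis_bracket p \<phi> i j =
     (if i < j then Fupper p \<phi> i j else if j < i then - Fupper p \<phi> j i else 0)"

definition Fbracket :: "nat \<Rightarrow> (nat \<Rightarrow> complex) \<Rightarrow> (nat \<Rightarrow> complex) \<Rightarrow> (nat \<Rightarrow> complex) \<Rightarrow> (nat \<Rightarrow> complex)" where
  "Fbracket p \<phi> x y =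
     (\<lambda>m. \<Sum>i\<in>{1..2*p}. \<Sum>j\<in>{1..2*p}. x i * y j * Fbasis_bracket p \<phi> i j m)"

definition in_Omega1 :: "nat \<Rightarrow> (nat \<Rightarrow> complex) \<Rightarrow> bool" where
  "in_Omega1 p \<phi> \<longleftrightarrow>
     (\<exists>i\<in>{1..p-1}. \<exists>j\<in>{1..p-1}. 1 + \<phi> i + \<phi> j = 0 \<or> 2 + \<phi> i + \<phi> j = 0)
   \<or> (\<exists>i\<in>{1..p-1}. \<exists>j\<in>{1..p-1}. i \<noteq> j \<and> \<phi> i = \<phi> j)
   \<or> (\<exists>i\<in>{1..p-1}. \<phi> i = 0 \<or> \<phi> i + 1 = 0 \<or> 2 * \<phi> i + 1 = 0)"

definition DerF :: "nat \<Rightarrow> (nat \<Rightarrow> complex) \<Rightarrow> ((nat \<Rightarrow> complex) \<Rightarrow> (nat \<Rightarrow> complex)) set" where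
  "DerF p \<phi> = derivations (Fcarrier p) (Fbracket p \<phi>) vsc"

end

theory Submission
  imports Defs
begin


lemma idx_cases:
  fixes n p :: nat assumes "n \<in> {1..2*p}"
  obtains "n = 1" | "n = 2" | k where "k \<in> {1..p-1}" "n = 2*k+1" | k where "k \<in> {1..p-1}" "n = 2*k+2"
proof -
  have "n = 1 \<or> n = 2 \<or> (n \<ge> 3 \<and> odd n) \<or> (n \<ge> 3 \<and> even n)" using assms by auto
  then consider "n = 1" | "n = 2" | "n \<ge> 3" "odd n" | "n \<ge> 3" "even n" by blast
  then show ?thesis
  proof cases
    case 3
    then obtain k where "n = 2*k+1" by (metis oddE)
    with 3 assms show ?thesis using that(3)[of k] by auto
  next
    case 4
    then obtain k where "n = 2*k" by (metis evenE)
    with 4 assms show ?thesis using that(4)[of "k - 1"] by auto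
  qed (use that in auto)
qed


datatype prm = Prm (pa: complex) (pal: complex) (pb: "nat \<Rightarrow> complex") (pd: "nat \<Rightarrow> complex") (pe: "nat \<Rightarrow> complex")

definition fbr :: "nat \<Rightarrow> (nat \<Rightarrow> complex) \<Rightarrow> (nat \<Rightarrow> complex) \<Rightarrow> (nat \<Rightarrow> complex) \<Rightarrow> nat \<Rightarrow> complex" where
"fbr p \<phi> x y = (\<lambda>m. if m = 1 then x 1 * y 2 - x 2 * y 1 + (\<Sum>k\<in>{1..p-1}. x (2*k+1) * y (2*k+2) - x (2*k+2) * y (2*k+1))
   else if 3 \<le> m \<and> m \<le> 2*p \<and> odd m then \<phi> ((m-1) div 2) * (x 2 * y m - x m * y 2)
   else if 4 \<le> m \<and> m \<le> 2*p \<and> even m then - (1 + \<phi> ((m-2) div 2)) * (x 2 * y m - x m * y 2)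
   else 0)"

lemma nat_par_simps[simp]:
  fixes a b :: nat
  shows "2*a+2 \<noteq> 2*b+1" "2*a+1 \<noteq> 2*b+2" "(2*a+1 = 2*b+1) = (a = b)" "(2*a+2 = 2*b+2) = (a = b)"
    "2*a+1 \<noteq> 2" "2*a+2 \<noteq> 1" "(2*a+1 = 1) = (a = 0)" "(2*a+2 = 2) = (a = 0)"
    "Suc (2*a) \<noteq> 2*b" "2*a \<noteq> Suc (2*b)" "Suc (2*a) \<noteq> 2" "2 \<noteq> Suc (2*a)"
  by presburger+

lemma fbr_1[simp]: "fbr p \<phi> x y 1 = x 1 * y 2 - x 2 * y 1 + (\<Sum>k\<in>{1..p-1}. x (2*k+1) * y (2*k+2) - x (2*k+2) * y (2*k+1))"
  unfolding fbr_def by (simp only: refl if_True)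
lemma fbr_2[simp]: "fbr p \<phi> x y 2 = 0"
  by (simp add: fbr_def)
lemma fbr_odd[simp]: "k \<in> {1..p-1} \<Longrightarrow> fbr p \<phi> x y (2*k+1) = \<phi> k * (x 2 * y (2*k+1) - x (2*k+1) * y 2)"
  by (auto simp add: fbr_def)
lemma fbr_even[simp]: "k \<in> {1..p-1} \<Longrightarrow> fbr p \<phi> x y (2*k+2) = - (1 + \<phi> k) * (x 2 * y (2*k+2) - x (2*k+2) * y 2)"
  by (auto simp add: fbr_def)
lemma sum_ind2[simp]: "finite S \<Longrightarrow> (\<Sum>x\<in>S. (if x = a then 1 else 0) * (if x = b then 1 else (0::complex))) = (if a = b \<and> a \<in> S then 1 else 0)"
proof -
  assume "finite S"
  have "(\<Sum>x\<in>S. (if x = a then 1 else 0) * (if x = b then 1 else (0::complex))) = (\<Sum>x\<in>S. if x = a then (if a = b then 1 else 0) else 0)"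
    by (rule sum.cong) auto
  also have "\<dots> = (if a = b \<and> a \<in> S then 1 else 0)" using \<open>finite S\<close> by simp
  finally show ?thesis .
qed

lemma sum_ind2'[simp]: "finite S \<Longrightarrow> (\<Sum>x\<in>S. - ((if x = a then 1 else 0) * (if x = b then 1 else (0::complex)))) = (if a = b \<and> a \<in> S then -1 else 0)"
  by (auto simp add: sum_negf)

lemma fbr_out: "m \<notin> {1..2*p} \<Longrightarrow> p \<ge> 1 \<Longrightarrow> fbr p \<phi> x y m = 0"
  by (auto simp add: fbr_def)

lemma FBB_eq:
  assumes "i \<in> {1..2*p}" "j \<in> {1..2*p}"
  shows "Fbasis_bracket p \<phi> i j = fbr p \<phi> (unitv i) (unitv j)"
proof (rule ext)
  fix m
  show "Fbasis_bracket p \<phi> i j m = fbr p \<phi> (unitv i) (unitv j) m"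
  proof (cases "m \<in> {1..2*p}")
    case False
    have "p \<ge> 1" using assms by auto
    then show ?thesis using assms False by (auto simp add: fbr_out Fbasis_bracket_def Fupper_def unitv_def vsc_def)
  next
    case True
    show ?thesis
      apply (rule idx_cases[OF assms(1)]; rule idx_cases[OF assms(2)]; rule idx_cases[OF True])
      apply (auto simp add: Fbasis_bracket_def Fupper_def unitv_def vsc_def fbr_def)
      done
  qed
qed


lemma sum_apply: "(sum f S) x = (\<Sum>i\<in>S. f i x)"
proof (cases "finite S")
  case True then show ?thesis by (induction S rule: finite_induct) auto
qed auto

lemma unitv_in[simp]: "j \<in> {1..2*p} \<Longrightarrow> unitv j \<in> Fcarrier p"
  by (auto simp: Fcarrier_def unitv_def)

lemma Fcarrier_out: "x \<in> Fcarrier p \<Longrightarrow> i \<notin> {1..2*p} \<Longrightarrow> x i = 0"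
  by (auto simp: Fcarrier_def)

lemma Fc_add[simp]: "x \<in> Fcarrier p \<Longrightarrow> y \<in> Fcarrier p \<Longrightarrow> x + y \<in> Fcarrier p"
  by (auto simp: Fcarrier_def)
lemma Fc_diff[simp]: "x \<in> Fcarrier p \<Longrightarrow> y \<in> Fcarrier p \<Longrightarrow> x - y \<in> Fcarrier p"
  by (auto simp: Fcarrier_def)
lemma Fc_vsc[simp]: "x \<in> Fcarrier p \<Longrightarrow> vsc c x \<in> Fcarrier p"
  by (auto simp: Fcarrier_def vsc_def)
lemma Fc_zero[simp]: "0 \<in> Fcarrier p"
  by (auto simp: Fcarrier_def)
lemma Fc_sum: "(\<And>i. i \<in> S \<Longrightarrow> f i \<in> Fcarrier p) \<Longrightarrow> sum f S \<in> Fcarrier p"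
  by (induction S rule: infinite_finite_induct) auto

lemma V_expand: "x \<in> Fcarrier p \<Longrightarrow> x n = (\<Sum>i\<in>{1..2*p}. x i * unitv i n)"
proof -
  assume x: "x \<in> Fcarrier p"
  have "(\<Sum>i\<in>{1..2*p}. x i * unitv i n) = (\<Sum>i\<in>{1..2*p}. if n = i then x n else 0)"
    by (rule sum.cong) (auto simp: unitv_def)
  then show ?thesis using x by (auto simp: Fcarrier_out)
qed

lemma V_expand_fun: "x \<in> Fcarrier p \<Longrightarrow> x = (\<Sum>i\<in>{1..2*p}. vsc (x i) (unitv i))"
  by (rule ext) (simp add: sum_apply vsc_def V_expand[of x p])

lemma fbr_add_left: "fbr p \<phi> (\<lambda>n. a n + b n) y m = fbr p \<phi> a y m + fbr p \<phi> b y m"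
  by (simp add: fbr_def sum.distrib[symmetric] algebra_simps)
lemma fbr_add_right: "fbr p \<phi> y (\<lambda>n. a n + b n) m = fbr p \<phi> y a m + fbr p \<phi> y b m"
  by (simp add: fbr_def sum.distrib[symmetric] algebra_simps)
lemma fbr_scale_left: "fbr p \<phi> (\<lambda>n. c * a n) y m = c * fbr p \<phi> a y m"
  by (simp add: fbr_def sum_distrib_left algebra_simps)
lemma fbr_scale_right: "fbr p \<phi> y (\<lambda>n. c * a n) m = c * fbr p \<phi> y a m"
  by (simp add: fbr_def sum_distrib_left algebra_simps)
lemma fbr_zero_left: "fbr p \<phi> (\<lambda>n. 0) y m = 0"
  by (simp add: fbr_def)
lemma fbr_zero_right: "fbr p \<phi> y (\<lambda>n. 0) m = 0"
  by (simp add: fbr_def)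

lemma fbr_sum_left: "fbr p \<phi> (\<lambda>n. \<Sum>i\<in>S. c i * u i n) y m = (\<Sum>i\<in>S. c i * fbr p \<phi> (u i) y m)"
proof (induction S rule: infinite_finite_induct)
  case (infinite A) then show ?case by (simp add: fbr_zero_left)
next
  case empty then show ?case by (simp add: fbr_zero_left)
next
  case (insert a F)
  then show ?case by (simp add: fbr_add_left fbr_scale_left)
qed

lemma fbr_sum_right: "fbr p \<phi> y (\<lambda>n. \<Sum>i\<in>S. c i * u i n) m = (\<Sum>i\<in>S. c i * fbr p \<phi> y (u i) m)"
proof (induction S rule: infinite_finite_induct)
  case (infinite A) then show ?case by (simp add: fbr_zero_right)
next
  case empty then show ?case by (simp add: fbr_zero_right)
next
  case (insert a F)
  then show ?case by (simp add: fbr_add_right fbr_scale_right)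
qed

lemma Fbracket_eq:
  assumes "x \<in> Fcarrier p" "y \<in> Fcarrier p"
  shows "Fbracket p \<phi> x y = fbr p \<phi> x y"
proof (rule ext)
  fix m
  have ex: "x = (\<lambda>n. \<Sum>i\<in>{1..2*p}. x i * unitv i n)" using V_expand[OF assms(1)] by blast
  have ey: "y = (\<lambda>n. \<Sum>i\<in>{1..2*p}. y i * unitv i n)" using V_expand[OF assms(2)] by blast
  have "fbr p \<phi> x y m = fbr p \<phi> (\<lambda>n. \<Sum>i\<in>{1..2*p}. x i * unitv i n) (\<lambda>n. \<Sum>j\<in>{1..2*p}. y j * unitv j n) m"
    using ex ey by simp
  also have "\<dots> = (\<Sum>i\<in>{1..2*p}. x i * (\<Sum>j\<in>{1..2*p}. y j * fbr p \<phi> (unitv i) (unitv j) m))"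
    unfolding fbr_sum_left fbr_sum_right ..
  also have "\<dots> = (\<Sum>i\<in>{1..2*p}. \<Sum>j\<in>{1..2*p}. x i * y j * Fbasis_bracket p \<phi> i j m)"
  proof (rule sum.cong[OF refl])
    fix i assume i: "i \<in> {1..2*p}"
    show "x i * (\<Sum>j\<in>{1..2*p}. y j * fbr p \<phi> (unitv i) (unitv j) m) = (\<Sum>j\<in>{1..2*p}. x i * y j * Fbasis_bracket p \<phi> i j m)"
      unfolding sum_distrib_left
      by (rule sum.cong[OF refl]) (simp add: FBB_eq[OF i] mult.assoc)
  qed
  finally show "Fbracket p \<phi> x y m = fbr p \<phi> x y m" by (simp add: Fbracket_def)
qed


definition mkv :: "nat \<Rightarrow> (nat \<Rightarrow> complex) \<Rightarrow> prm \<Rightarrow> (nat \<Rightarrow> complex) \<Rightarrow> nat \<Rightarrow> complex" where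
"mkv p \<phi> P x = (\<lambda>m. if m = 1 then pa P * x 1 + pal P * x 2 + (\<Sum>k\<in>{1..p-1}. pd P k * x (2*k+1) + pe P k * x (2*k+2))
   else if 3 \<le> m \<and> m \<le> 2*p \<and> odd m then - \<phi> ((m-1) div 2) * pe P ((m-1) div 2) * x 2 + pb P ((m-1) div 2) * x m
   else if 4 \<le> m \<and> m \<le> 2*p \<and> even m then - (1 + \<phi> ((m-2) div 2)) * pd P ((m-2) div 2) * x 2 + (pa P - pb P ((m-2) div 2)) * x m
   else 0)"

lemma mkv_1[simp]: "mkv p \<phi> P x 1 = pa P * x 1 + pal P * x 2 + (\<Sum>k\<in>{1..p-1}. pd P k * x (2*k+1) + pe P k * x (2*k+2))"
  unfolding mkv_def by (simp only: refl if_True)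
lemma mkv_1'[simp]: "mkv p \<phi> P x (Suc 0) = pa P * x 1 + pal P * x 2 + (\<Sum>k\<in>{1..p-1}. pd P k * x (2*k+1) + pe P k * x (2*k+2))"
  using mkv_1 by simp
lemma fbr_1'[simp]: "fbr p \<phi> x y (Suc 0) = x 1 * y 2 - x 2 * y 1 + (\<Sum>k\<in>{1..p-1}. x (2*k+1) * y (2*k+2) - x (2*k+2) * y (2*k+1))"
  using fbr_1 by simp
lemma mkv_2[simp]: "mkv p \<phi> P x 2 = 0"
  by (simp add: mkv_def)
lemma mkv_odd[simp]: "k \<in> {1..p-1} \<Longrightarrow> mkv p \<phi> P x (2*k+1) = - \<phi> k * pe P k * x 2 + pb P k * x (2*k+1)"
  by (auto simp add: mkv_def)
lemma mkv_even[simp]: "k \<in> {1..p-1} \<Longrightarrow> mkv p \<phi> P x (2*k+2) = - (1 + \<phi> k) * pd P k * x 2 + (pa P - pb P k) * x (2*k+2)"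
  by (auto simp add: mkv_def)
lemma mkv_odd'[simp]: "k \<in> {1..p-1} \<Longrightarrow> mkv p \<phi> P x (Suc (2*k)) = - \<phi> k * pe P k * x 2 + pb P k * x (2*k+1)"
  using mkv_odd by simp
lemma mkv_even'[simp]: "k \<in> {1..p-1} \<Longrightarrow> mkv p \<phi> P x (Suc (Suc (2*k))) = - (1 + \<phi> k) * pd P k * x 2 + (pa P - pb P k) * x (2*k+2)"
  using mkv_even by simp
lemma fbr_odd'[simp]: "k \<in> {1..p-1} \<Longrightarrow> fbr p \<phi> x y (Suc (2*k)) = \<phi> k * (x 2 * y (2*k+1) - x (2*k+1) * y 2)"
  using fbr_odd by simp
lemma fbr_even'[simp]: "k \<in> {1..p-1} \<Longrightarrow> fbr p \<phi> x y (Suc (Suc (2*k))) = - (1 + \<phi> k) * (x 2 * y (2*k+2) - x (2*k+2) * y 2)"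
  using fbr_even by simp
lemma mkv_out: "m \<notin> {1..2*p} \<Longrightarrow> p \<ge> 1 \<Longrightarrow> mkv p \<phi> P x m = 0"
  by (auto simp add: mkv_def)

lemma mkv_in: "p \<ge> 1 \<Longrightarrow> mkv p \<phi> P x \<in> Fcarrier p"
  by (auto simp: Fcarrier_def mkv_out)

lemma mkv_leibniz:
  assumes "p \<ge> 1"
  shows "mkv p \<phi> P (fbr p \<phi> x y) m = fbr p \<phi> (mkv p \<phi> P x) y m + fbr p \<phi> x (mkv p \<phi> P y) m"
proof (cases "m \<in> {1..2*p}")
  case False then show ?thesis using assms by (simp add: mkv_out fbr_out)
next
  case True
  then show ?thesis
  proof (cases rule: idx_cases)
    case 1
    then show ?thesis
      apply simp
      by (simp add: algebra_simps sum.distrib sum_distrib_left sum_distrib_right sum_subtractf)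
  next
    case 2 then show ?thesis by simp
  next
    case (3 k) then show ?thesis apply simp by (simp add: algebra_simps)
  next
    case (4 k) then show ?thesis apply simp by (simp add: algebra_simps)
  qed
qed


definition Dm :: "nat \<Rightarrow> (nat \<Rightarrow> complex) \<Rightarrow> prm \<Rightarrow> (nat \<Rightarrow> complex) \<Rightarrow> nat \<Rightarrow> complex" where
  "Dm p \<phi> P = (\<lambda>x. if x \<in> Fcarrier p then mkv p \<phi> P x else 0)"

lemma mkv_add: "mkv p \<phi> P (x + y) = mkv p \<phi> P x + mkv p \<phi> P y"
  by (rule ext) (simp add: mkv_def sum.distrib algebra_simps)

lemma mkv_vsc: "mkv p \<phi> P (vsc c x) = vsc c (mkv p \<phi> P x)"
  by (rule ext) (simp add: mkv_def vsc_def sum_distrib_left algebra_simps)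

lemma fbr_in: "p \<ge> 1 \<Longrightarrow> fbr p \<phi> x y \<in> Fcarrier p"
  by (auto simp: Fcarrier_def fbr_out)

lemma Fbracket_in: "x \<in> Fcarrier p \<Longrightarrow> y \<in> Fcarrier p \<Longrightarrow> p \<ge> 1 \<Longrightarrow> Fbracket p \<phi> x y \<in> Fcarrier p"
  by (simp add: Fbracket_eq fbr_in)

lemma Dm_in_DerF: "p \<ge> 1 \<Longrightarrow> Dm p \<phi> P \<in> DerF p \<phi>"
  unfolding DerF_def derivations_def
proof (intro CollectI conjI ballI allI impI)
  assume p: "p \<ge> 1"
  fix x y assume x: "x \<in> Fcarrier p" and y: "y \<in> Fcarrier p"
  show "Dm p \<phi> P (Fbracket p \<phi> x y) = Fbracket p \<phi> (Dm p \<phi> P x) y + Fbracket p \<phi> x (Dm p \<phi> P y)"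
  proof -
    have "mkv p \<phi> P (fbr p \<phi> x y) = fbr p \<phi> (mkv p \<phi> P x) y + fbr p \<phi> x (mkv p \<phi> P y)"
      by (rule ext) (simp add: mkv_leibniz[OF p])
    then show ?thesis using x y p by (auto simp: Dm_def Fbracket_in Fbracket_eq mkv_in fbr_in)
  qed
qed (auto simp: Dm_def mkv_in mkv_add mkv_vsc)

lemma der_zero:
  assumes "d \<in> derivations (Fcarrier p) br vsc"
  shows "d 0 = 0"
proof -
  have "\<forall>x\<in>Fcarrier p. \<forall>y\<in>Fcarrier p. d (x + y) = d x + d y" using assms unfolding derivations_def by blast
  from this[rule_format, OF Fc_zero Fc_zero] show ?thesis by simp
qed

lemma der_sum:
  assumes "d \<in> derivations (Fcarrier p) br vsc" "S \<subseteq> {1..2*p}"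
  shows "d (\<Sum>i\<in>S. vsc (c i) (unitv i)) = (\<Sum>i\<in>S. vsc (c i) (d (unitv i)))"
  using assms(2)
proof (induction S rule: infinite_finite_induct)
  case (infinite A) then show ?case by (meson finite_atLeastAtMost finite_subset)
next
  case empty then show ?case using der_zero[OF assms(1)] by (simp only: sum.empty)
next
  case (insert a F)
  have a: "a \<in> {1..2*p}" using insert by auto
  have s: "(\<Sum>i\<in>F. vsc (c i) (unitv i)) \<in> Fcarrier p"
    by (rule Fc_sum) (use insert in auto)
  have "d (\<Sum>i\<in>insert a F. vsc (c i) (unitv i)) = d (vsc (c a) (unitv a) + (\<Sum>i\<in>F. vsc (c i) (unitv i)))"
    using insert by simp
  also have "\<dots> = d (vsc (c a) (unitv a)) + d (\<Sum>i\<in>F. vsc (c i) (unitv i))"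
    using assms(1) a s unfolding derivations_def by auto
  also have "\<dots> = vsc (c a) (d (unitv a)) + (\<Sum>i\<in>F. vsc (c i) (d (unitv i)))"
    using assms(1) a insert unfolding derivations_def by auto
  finally show ?case by (simp only: sum.insert[OF insert(1,2)])
qed

lemma der_expand:
  assumes "d \<in> derivations (Fcarrier p) br vsc" "x \<in> Fcarrier p"
  shows "d x = (\<Sum>i\<in>{1..2*p}. vsc (x i) (d (unitv i)))"
  using der_sum[OF assms(1), of "{1..2*p}" "\<lambda>i. x i"] V_expand_fun[OF assms(2)] by simp

lemma der_ext:
  assumes "d \<in> derivations (Fcarrier p) br vsc" "d' \<in> derivations (Fcarrier p) br' vsc"
    and "\<And>i. i \<in> {1..2*p} \<Longrightarrow> d (unitv i) = d' (unitv i)"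
  shows "d = d'"
proof (rule ext)
  fix x show "d x = d' x"
  proof (cases "x \<in> Fcarrier p")
    case True then show ?thesis using der_expand[OF assms(1) True] der_expand[OF assms(2) True] assms(3) by simp
  next
    case False then show ?thesis using assms(1,2) unfolding derivations_def by auto
  qed
qed


definition wt :: "nat \<Rightarrow> (nat \<Rightarrow> complex) \<Rightarrow> nat \<Rightarrow> complex" where
  "wt p \<phi> m = (if m = 1 then -1 else if m = 2 then 0
     else if 3 \<le> m \<and> m \<le> 2*p \<and> odd m then \<phi> ((m-1) div 2)
     else if 4 \<le> m \<and> m \<le> 2*p \<and> even m then - (1 + \<phi> ((m-2) div 2)) else 0)"

lemma wt_1[simp]: "wt p \<phi> 1 = -1" and wt_1'[simp]: "wt p \<phi> (Suc 0) = -1" and wt_2[simp]: "wt p \<phi> 2 = 0"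
  by (auto simp: wt_def)
lemma wt_odd[simp]: "k \<in> {1..p-1} \<Longrightarrow> wt p \<phi> (2*k+1) = \<phi> k"
  and wt_odd'[simp]: "k \<in> {1..p-1} \<Longrightarrow> wt p \<phi> (Suc (2*k)) = \<phi> k"
  and wt_even[simp]: "k \<in> {1..p-1} \<Longrightarrow> wt p \<phi> (2*k+2) = - (1 + \<phi> k)"
  and wt_even'[simp]: "k \<in> {1..p-1} \<Longrightarrow> wt p \<phi> (Suc (Suc (2*k))) = - (1 + \<phi> k)"
  by (auto simp: wt_def)

lemma mult_if01[simp]: "x * (if P then 1 else 0) = (if P then x else (0::complex))"
  and mult_if01'[simp]: "(if P then 1 else 0) * x = (if P then x else (0::complex))"
  by auto

lemma neg_if0[simp]: "- (if P then a else 0) = (if P then - a else (0::complex))"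
  by auto

lemma fbr_antisym: "fbr p \<phi> x y m = - fbr p \<phi> y x m"
  by (simp add: fbr_def algebra_simps sum_negf[symmetric] sum_subtractf)

lemma fbr_u_e1: "p \<ge> 1 \<Longrightarrow> fbr p \<phi> u (unitv 1) m = (if m = 1 then - u 2 else 0)"
proof (cases "m \<in> {1..2*p}")
  case True
  then show ?thesis by (cases rule: idx_cases) (simp_all add: unitv_def)
qed (auto simp add: fbr_out)

lemma fbr_u_e2: "u \<in> Fcarrier p \<Longrightarrow> p \<ge> 1 \<Longrightarrow> fbr p \<phi> u (unitv 2) m = - wt p \<phi> m * u m"
proof (cases "m \<in> {1..2*p}")
  case True
  then show ?thesis
    apply (cases rule: idx_cases)
    apply (simp_all add: unitv_def)
    apply (simp_all add: algebra_simps)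
    done
qed (simp add: fbr_out Fcarrier_out)

lemma fbr_u_eo: "k \<in> {1..p-1} \<Longrightarrow> fbr p \<phi> u (unitv (2*k+1)) m =
   (if m = 1 then - u (2*k+2) else if m = 2*k+1 then \<phi> k * u 2 else 0)"
proof (cases "m \<in> {1..2*p}")
  case True
  assume k: "k \<in> {1..p-1}"
  from True show ?thesis by (cases rule: idx_cases) (use k in \<open>auto simp add: unitv_def\<close>)
qed (auto simp add: fbr_out)

lemma fbr_u_ee: "k \<in> {1..p-1} \<Longrightarrow> fbr p \<phi> u (unitv (2*k+2)) m =
   (if m = 1 then u (2*k+1) else if m = 2*k+2 then - (1 + \<phi> k) * u 2 else 0)"
proof (cases "m \<in> {1..2*p}")
  case True
  assume k: "k \<in> {1..p-1}"
  from True show ?thesis by (cases rule: idx_cases) (use k in \<open>auto simp add: unitv_def\<close>)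
qed (auto simp add: fbr_out)


definition par :: "((nat \<Rightarrow> complex) \<Rightarrow> nat \<Rightarrow> complex) \<Rightarrow> prm" where
  "par X = Prm (X (unitv 1) 1) (X (unitv 2) 1) (\<lambda>k. X (unitv (2*k+1)) (2*k+1)) (\<lambda>k. X (unitv (2*k+1)) 1) (\<lambda>k. X (unitv (2*k+2)) 1)"

lemma om:
  assumes "\<not> in_Omega1 p \<phi>" "k \<in> {1..p-1}" "k' \<in> {1..p-1}"
  shows "\<phi> k \<noteq> 0" "\<phi> k + 1 \<noteq> 0" "1 + \<phi> k + \<phi> k' \<noteq> 0" "k \<noteq> k' \<Longrightarrow> \<phi> k \<noteq> \<phi> k'"
  using assms unfolding in_Omega1_def by blast+

lemma DerF_der: "X \<in> DerF p \<phi> \<Longrightarrow> X \<in> derivations (Fcarrier p) (Fbracket p \<phi>) vsc"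
  by (simp add: DerF_def)

lemma DerF_in: "X \<in> DerF p \<phi> \<Longrightarrow> x \<in> Fcarrier p \<Longrightarrow> X x \<in> Fcarrier p"
  by (simp add: DerF_def derivations_def)

lemma DerF_leib: "X \<in> DerF p \<phi> \<Longrightarrow> x \<in> Fcarrier p \<Longrightarrow> y \<in> Fcarrier p \<Longrightarrow> p \<ge> 1 \<Longrightarrow>
   X (fbr p \<phi> x y) = fbr p \<phi> (X x) y + fbr p \<phi> x (X y)"
  using DerF_in[of X p \<phi>] unfolding DerF_def derivations_def by (simp add: Fbracket_eq)

lemma DerF_vsc: "X \<in> DerF p \<phi> \<Longrightarrow> x \<in> Fcarrier p \<Longrightarrow> X (vsc c x) = vsc c (X x)"
  by (simp add: DerF_def derivations_def)

lemma col:
  assumes X: "X \<in> DerF p \<phi>" and p: "p \<ge> 1" and j: "j \<in> {1..2*p}"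
  shows "(wt p \<phi> m - wt p \<phi> j) * X (unitv j) m = - fbr p \<phi> (X (unitv 2)) (unitv j) m"
proof -
  have e2: "unitv 2 \<in> Fcarrier p" using p by simp
  have ej: "unitv j \<in> Fcarrier p" using j by simp
  have f: "fbr p \<phi> (unitv j) (unitv 2) = vsc (- wt p \<phi> j) (unitv j)"
    by (rule ext) (subst fbr_u_e2[OF ej p], simp add: vsc_def unitv_def)
  have "X (fbr p \<phi> (unitv j) (unitv 2)) = fbr p \<phi> (X (unitv j)) (unitv 2) + fbr p \<phi> (unitv j) (X (unitv 2))"
    by (rule DerF_leib[OF X ej e2 p])
  then have "vsc (- wt p \<phi> j) (X (unitv j)) m = fbr p \<phi> (X (unitv j)) (unitv 2) m + fbr p \<phi> (unitv j) (X (unitv 2)) m"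
    unfolding f DerF_vsc[OF X ej] by simp
  then show ?thesis
    using fbr_u_e2[OF DerF_in[OF X ej] p, of \<phi> m] fbr_antisym[of p \<phi> "unitv j" "X (unitv 2)" m]
    by (simp add: vsc_def algebra_simps)
qed

lemma rel:
  assumes X: "X \<in> DerF p \<phi>" and k: "k \<in> {1..p-1}"
  shows "X (unitv 1) 1 = X (unitv (2*k+1)) (2*k+1) + X (unitv (2*k+2)) (2*k+2)"
proof -
  have p: "p \<ge> 1" using k by auto
  have e1: "unitv (2*k+1) \<in> Fcarrier p" "unitv (2*k+2) \<in> Fcarrier p" using k by auto
  have f: "fbr p \<phi> (unitv (2*k+1)) (unitv (2*k+2)) = unitv 1"
    by (rule ext) (subst fbr_u_ee[OF k], simp add: unitv_def)
  have "X (fbr p \<phi> (unitv (2*k+1)) (unitv (2*k+2))) = fbr p \<phi> (X (unitv (2*k+1))) (unitv (2*k+2)) + fbr p \<phi> (unitv (2*k+1)) (X (unitv (2*k+2)))"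
    by (rule DerF_leib[OF X e1 p])
  then have "X (unitv 1) 1 = fbr p \<phi> (X (unitv (2*k+1))) (unitv (2*k+2)) 1 + fbr p \<phi> (unitv (2*k+1)) (X (unitv (2*k+2))) 1"
    unfolding f by simp
  then show ?thesis
    using fbr_u_ee[OF k, of \<phi> "X (unitv (2*k+1))" 1] fbr_u_eo[OF k, of \<phi> "X (unitv (2*k+2))" 1]
      fbr_antisym[of p \<phi> "unitv (2*k+1)" "X (unitv (2*k+2))" 1]
    by simp
qed


lemma unitv_apply: "unitv k i = (if i = k then 1 else 0)"
  by (simp add: unitv_def)

context
  fixes X p \<phi>
  assumes X: "X \<in> DerF p \<phi>" and p: "p \<ge> 1" and nom: "\<not> in_Omega1 p \<phi>"
begin

lemma u2: "X (unitv 2) 2 = 0"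
  using col[OF X p, of 1 1, unfolded fbr_u_e1[OF p]] p by simp

lemma col1: "m \<in> {1..2*p} \<Longrightarrow> m \<noteq> 1 \<Longrightarrow> X (unitv 1) m = 0"
proof -
  assume m: "m \<in> {1..2*p}" "m \<noteq> 1"
  have e: "(wt p \<phi> m + 1) * X (unitv 1) m = 0"
    using col[OF X p, of 1 m, unfolded fbr_u_e1[OF p]] p m by simp
  from m(1) show ?thesis
  proof (cases rule: idx_cases)
    case (3 k) then show ?thesis using e om(2)[OF nom, of k k] by simp
  next
    case (4 k) then show ?thesis using e om(1)[OF nom, of k k] by simp
  qed (use e m in auto)
qed

lemma colo: "k \<in> {1..p-1} \<Longrightarrow> m \<in> {1..2*p} \<Longrightarrow> m \<noteq> 1 \<Longrightarrow> m \<noteq> 2*k+1 \<Longrightarrow> X (unitv (2*k+1)) m = 0"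
proof -
  assume k: "k \<in> {1..p-1}" and m: "m \<in> {1..2*p}" "m \<noteq> 1" "m \<noteq> 2*k+1"
  have j: "2*k+1 \<in> {1..2*p}" using k by auto
  have e: "(wt p \<phi> m - \<phi> k) * X (unitv (2*k+1)) m = 0"
    using col[OF X p j, of m, unfolded fbr_u_eo[OF k] wt_odd[OF k]] k m by simp
  have "wt p \<phi> m - \<phi> k \<noteq> 0"
    using m(1)
  proof (cases rule: idx_cases)
    case 2 then show ?thesis using om(1)[OF nom k k] by simp
  next
    case (3 k')
    have "wt p \<phi> m = \<phi> k'" using 3 by simp
    then show ?thesis using om(4)[OF nom 3(1) k] m 3 by auto
  next
    case (4 k')
    have "wt p \<phi> m = - (1 + \<phi> k')" using 4 by simp
    moreover have "- (1 + \<phi> k') - \<phi> k = - (1 + \<phi> k' + \<phi> k)" by simp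
    ultimately show ?thesis using om(3)[OF nom 4(1) k] by (metis neg_equal_0_iff_equal)
  qed (use m in auto)
  then show ?thesis using e by simp
qed

lemma cole: "k \<in> {1..p-1} \<Longrightarrow> m \<in> {1..2*p} \<Longrightarrow> m \<noteq> 1 \<Longrightarrow> m \<noteq> 2*k+2 \<Longrightarrow> X (unitv (2*k+2)) m = 0"
proof -
  assume k: "k \<in> {1..p-1}" and m: "m \<in> {1..2*p}" "m \<noteq> 1" "m \<noteq> 2*k+2"
  have j: "2*k+2 \<in> {1..2*p}" using k by auto
  have e: "(wt p \<phi> m - - (1 + \<phi> k)) * X (unitv (2*k+2)) m = 0"
    using col[OF X p j, of m, unfolded fbr_u_ee[OF k] wt_even[OF k]] k m by simp
  have "wt p \<phi> m - - (1 + \<phi> k) \<noteq> 0"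
    using m(1)
  proof (cases rule: idx_cases)
    case 2
    have "(0::complex) - - (1 + \<phi> k) = \<phi> k + 1" by simp
    then show ?thesis using om(2)[OF nom k k] 2 by simp
  next
    case (3 k')
    have "wt p \<phi> m = \<phi> k'" using 3 by simp
    moreover have "\<phi> k' - - (1 + \<phi> k) = 1 + \<phi> k' + \<phi> k" by simp
    ultimately show ?thesis using om(3)[OF nom 3(1) k] by metis
  next
    case (4 k')
    have "wt p \<phi> m = - (1 + \<phi> k')" using 4 by simp
    moreover have "- (1 + \<phi> k') - - (1 + \<phi> k) = \<phi> k - \<phi> k'" by simp
    ultimately show ?thesis using om(4)[OF nom 4(1) k] m 4 by auto
  qed (use m in auto)
  then show ?thesis using e by simp
qed

lemma u_odd: "k \<in> {1..p-1} \<Longrightarrow> X (unitv 2) (2*k+1) = - \<phi> k * X (unitv (2*k+2)) 1"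
proof -
  assume k: "k \<in> {1..p-1}"
  have j: "2*k+2 \<in> {1..2*p}" using k by auto
  show ?thesis using col[OF X p j, of 1, unfolded fbr_u_ee[OF k] wt_even[OF k]] k by simp
qed

lemma u_even: "k \<in> {1..p-1} \<Longrightarrow> X (unitv 2) (2*k+2) = - (1 + \<phi> k) * X (unitv (2*k+1)) 1"
proof -
  assume k: "k \<in> {1..p-1}"
  have j: "2*k+1 \<in> {1..2*p}" using k by auto
  show ?thesis using col[OF X p j, of 1, unfolded fbr_u_eo[OF k] wt_odd[OF k]] k by (simp add: algebra_simps)
qed

lemma rel': "k \<in> {1..p-1} \<Longrightarrow> X (unitv (2*k+2)) (2*k+2) = X (unitv 1) 1 - X (unitv (2*k+1)) (2*k+1)"
  using rel[OF X, of k] by simp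

lemma col1_2: "X (unitv 1) 2 = 0" and col1_2': "X (unitv (Suc 0)) 2 = 0"
  using col1[of 2] p by auto

lemma DerF_char: "X = Dm p \<phi> (par X)"
proof (rule der_ext[OF DerF_der[OF X] DerF_der[OF Dm_in_DerF[OF p]]])
  fix i assume i: "i \<in> {1..2*p}"
  show "X (unitv i) = Dm p \<phi> (par X) (unitv i)"
  proof (rule ext)
    fix m
    have D: "Dm p \<phi> (par X) (unitv i) m = mkv p \<phi> (par X) (unitv i) m" using i by (simp add: Dm_def)
    show "X (unitv i) m = Dm p \<phi> (par X) (unitv i) m"
    proof (cases "m \<in> {1..2*p}")
      case False
      then show ?thesis unfolding D using mkv_out[OF False p] Fcarrier_out[OF DerF_in[OF X] False] i by simp
    next
      case True
      show ?thesis unfolding D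
        apply (rule idx_cases[OF i]; rule idx_cases[OF True])
        apply (auto simp: par_def unitv_apply col1 colo cole u2 u_odd u_even rel' col1[simplified] p col1_2 col1_2' colo[simplified] cole[simplified] u_odd[simplified] u_even[simplified] rel'[simplified])
        done
    qed
  qed
qed

end


definition peq :: "nat \<Rightarrow> prm \<Rightarrow> prm \<Rightarrow> bool" where
  "peq p P Q \<longleftrightarrow> pa P = pa Q \<and> pal P = pal Q \<and> (\<forall>k\<in>{1..p-1}. pb P k = pb Q k \<and> pd P k = pd Q k \<and> pe P k = pe Q k)"

definition padd :: "prm \<Rightarrow> prm \<Rightarrow> prm" where
  "padd P Q = Prm (pa P + pa Q) (pal P + pal Q) (\<lambda>k. pb P k + pb Q k) (\<lambda>k. pd P k + pd Q k) (\<lambda>k. pe P k + pe Q k)"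

definition psc :: "complex \<Rightarrow> prm \<Rightarrow> prm" where
  "psc c P = Prm (c * pa P) (c * pal P) (\<lambda>k. c * pb P k) (\<lambda>k. c * pd P k) (\<lambda>k. c * pe P k)"

definition pbr :: "nat \<Rightarrow> prm \<Rightarrow> prm \<Rightarrow> prm" where
  "pbr p P Q = Prm 0 (pa P * pal Q - pa Q * pal P + (\<Sum>k\<in>{1..p-1}. pd P k * pe Q k - pe P k * pd Q k)) (\<lambda>k. 0)
     (\<lambda>k. (pa P - pb P k) * pd Q k - (pa Q - pb Q k) * pd P k) (\<lambda>k. pb P k * pe Q k - pb Q k * pe P k)"

lemma mkv_zero_arg[simp]: "mkv p \<phi> P 0 = 0"
  by (rule ext) (simp add: mkv_def)

lemma mkv_br:
  assumes p: "p \<ge> 1"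
  shows "mkv p \<phi> P (mkv p \<phi> Q x) m - mkv p \<phi> Q (mkv p \<phi> P x) m = mkv p \<phi> (pbr p P Q) x m"
proof (cases "m \<in> {1..2*p}")
  case False then show ?thesis using assms by (simp add: mkv_out)
next
  case True
  then show ?thesis
  proof (cases rule: idx_cases)
    case 1
    then show ?thesis
      apply (simp add: pbr_def)
      by (simp add: algebra_simps sum.distrib sum_distrib_left sum_distrib_right sum_subtractf)
  next
    case 2 then show ?thesis by simp
  next
    case (3 k) then show ?thesis apply (simp add: pbr_def) by (simp add: algebra_simps)
  next
    case (4 k) then show ?thesis apply (simp add: pbr_def) by (simp add: algebra_simps)
  qed
qed

lemma Dm_br:
  assumes p: "p \<ge> 1"
  shows "comm_bracket (Dm p \<phi> P) (Dm p \<phi> Q) = Dm p \<phi> (pbr p P Q)"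
proof (rule ext)
  fix x
  show "comm_bracket (Dm p \<phi> P) (Dm p \<phi> Q) x = Dm p \<phi> (pbr p P Q) x"
  proof (cases "x \<in> Fcarrier p")
    case True
    have "mkv p \<phi> P (mkv p \<phi> Q x) - mkv p \<phi> Q (mkv p \<phi> P x) = mkv p \<phi> (pbr p P Q) x"
      by (rule ext) (simp add: mkv_br[OF p])
    then show ?thesis using True p by (simp add: comm_bracket_def Dm_def mkv_in)
  next
    case False
    then show ?thesis by (simp add: comm_bracket_def Dm_def)
  qed
qed


lemma Dm_add: "Dm p \<phi> P + Dm p \<phi> Q = Dm p \<phi> (padd P Q)"
proof (rule ext)
  fix x
  have "mkv p \<phi> P x + mkv p \<phi> Q x = mkv p \<phi> (padd P Q) x"
    by (rule ext) (simp add: mkv_def padd_def sum.distrib algebra_simps)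
  then show "(Dm p \<phi> P + Dm p \<phi> Q) x = Dm p \<phi> (padd P Q) x"
    by (simp add: Dm_def)
qed

lemma Dm_sc: "fun_sc vsc c (Dm p \<phi> P) = Dm p \<phi> (psc c P)"
proof (rule ext)
  fix x
  have "vsc c (mkv p \<phi> P x) = mkv p \<phi> (psc c P) x"
    by (rule ext) (simp add: mkv_def psc_def vsc_def sum_distrib_left algebra_simps)
  then show "fun_sc vsc c (Dm p \<phi> P) x = Dm p \<phi> (psc c P) x"
    by (simp add: Dm_def fun_sc_def vsc_def zero_fun_def)
qed

lemma peq_refl[simp]: "peq p P P" by (simp add: peq_def)
lemma peq_sym: "peq p P Q \<Longrightarrow> peq p Q P" by (simp add: peq_def)
lemma peq_trans: "peq p P Q \<Longrightarrow> peq p Q R \<Longrightarrow> peq p P R" by (simp add: peq_def)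

lemma par_Dm: "p \<ge> 1 \<Longrightarrow> peq p (par (Dm p \<phi> P)) P"
  unfolding peq_def par_def using unitv_in[of _ p]
  by (auto simp: Dm_def unitv_apply)

lemma Dm_peq: "peq p P Q \<Longrightarrow> Dm p \<phi> P = Dm p \<phi> Q"
proof -
  assume pq: "peq p P Q"
  have "mkv p \<phi> P = mkv p \<phi> Q"
  proof (intro ext)
    fix x m
    have h1: "3 \<le> m \<and> m \<le> 2*p \<and> odd m \<longrightarrow> (m-1) div 2 \<in> {1..p-1}" by auto
    have h2: "4 \<le> m \<and> m \<le> 2*p \<and> even m \<longrightarrow> (m-2) div 2 \<in> {1..p-1}" by auto
    have f1: "3 \<le> m \<and> m \<le> 2*p \<and> odd m \<longrightarrow> pb P ((m-1) div 2) = pb Q ((m-1) div 2) \<and> pe P ((m-1) div 2) = pe Q ((m-1) div 2)"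
      using h1 pq unfolding peq_def by blast
    have f2: "4 \<le> m \<and> m \<le> 2*p \<and> even m \<longrightarrow> pb P ((m-2) div 2) = pb Q ((m-2) div 2) \<and> pd P ((m-2) div 2) = pd Q ((m-2) div 2)"
      using h2 pq unfolding peq_def by blast
    have s: "(\<Sum>k\<in>{1..p-1}. pd P k * x (2*k+1) + pe P k * x (2*k+2)) = (\<Sum>k\<in>{1..p-1}. pd Q k * x (2*k+1) + pe Q k * x (2*k+2))"
      using pq unfolding peq_def by (auto intro!: sum.cong)
    show "mkv p \<phi> P x m = mkv p \<phi> Q x m"
      using pq f1 f2 s unfolding mkv_def peq_def by simp
  qed
  then show ?thesis unfolding Dm_def by (rule arg_cong[where f = "\<lambda>g. (\<lambda>x. if x \<in> Fcarrier p then g x else 0)"])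
qed

lemma Dm_eq_iff: "p \<ge> 1 \<Longrightarrow> Dm p \<phi> P = Dm p \<phi> Q \<longleftrightarrow> peq p P Q"
  by (metis Dm_peq par_Dm peq_sym peq_trans)

lemma par_add: "par (X + Y) = padd (par X) (par Y)"
  by (simp add: par_def padd_def)

lemma par_sc: "par (fun_sc vsc c X) = psc c (par X)"
  by (simp add: par_def psc_def fun_sc_def vsc_def)

lemma pbr_peq: "peq p P P' \<Longrightarrow> peq p Q Q' \<Longrightarrow> peq p (pbr p P Q) (pbr p P' Q')"
  unfolding peq_def pbr_def by (auto intro!: sum.cong)


definition P0 :: prm where "P0 = Prm 0 0 (\<lambda>_. 0) (\<lambda>_. 0) (\<lambda>_. 0)"

lemma Dm_P0: "Dm p \<phi> P0 = 0"
proof -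
  have "mkv p \<phi> P0 x = 0" for x by (rule ext) (simp add: mkv_def P0_def)
  then show ?thesis by (auto simp: Dm_def fun_eq_iff)
qed

lemma DerF_iff:
  assumes p: "p \<ge> 1" and nom: "\<not> in_Omega1 p \<phi>"
  shows "X \<in> DerF p \<phi> \<longleftrightarrow> (\<exists>P. X = Dm p \<phi> P)"
  using DerF_char[OF _ p nom] Dm_in_DerF[OF p] by blast

lemma DerF_zero: "0 \<in> DerF p \<phi>" if "p \<ge> 1"
  using Dm_in_DerF[OF that, of \<phi> P0] by (simp add: Dm_P0)

lemma theorem_iso:
  assumes p: "p \<ge> 1" and nom: "\<not> in_Omega1 p \<phi>" and nom': "\<not> in_Omega1 p \<phi>'"
  shows "lie_isomorphic (DerF p \<phi>) comm_bracket (fun_sc vsc) (DerF p \<phi>') comm_bracket (fun_sc vsc)"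
  unfolding lie_isomorphic_def
proof (intro exI conjI ballI allI)
  let ?f = "\<lambda>X. Dm p \<phi>' (par X)"
  show "bij_betw ?f (DerF p \<phi>) (DerF p \<phi>')"
    unfolding bij_betw_def
  proof
    show "inj_on ?f (DerF p \<phi>)"
    proof (rule inj_onI)
      fix X Y assume X: "X \<in> DerF p \<phi>" and Y: "Y \<in> DerF p \<phi>" and e: "?f X = ?f Y"
      have "peq p (par X) (par Y)" using e Dm_eq_iff[OF p] by blast
      then have "Dm p \<phi> (par X) = Dm p \<phi> (par Y)" by (rule Dm_peq)
      then show "X = Y" using DerF_char[OF X p nom] DerF_char[OF Y p nom] by simp
    qed
    show "?f ` DerF p \<phi> = DerF p \<phi>'"
    proof
      show "?f ` DerF p \<phi> \<subseteq> DerF p \<phi>'" using Dm_in_DerF[OF p] by blast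
      show "DerF p \<phi>' \<subseteq> ?f ` DerF p \<phi>"
      proof
        fix Y assume Y: "Y \<in> DerF p \<phi>'"
        have "?f (Dm p \<phi> (par Y)) = Dm p \<phi>' (par Y)"
          by (rule Dm_peq[OF par_Dm[OF p]])
        also have "\<dots> = Y" using DerF_char[OF Y p nom'] by simp
        finally show "Y \<in> ?f ` DerF p \<phi>" using Dm_in_DerF[OF p, of \<phi> "par Y"] by (metis image_eqI)
      qed
    qed
  qed
  fix X Y assume X: "X \<in> DerF p \<phi>" and Y: "Y \<in> DerF p \<phi>"
  show "?f (X + Y) = ?f X + ?f Y" by (simp add: par_add Dm_add)
  show "?f (comm_bracket X Y) = comm_bracket (?f X) (?f Y)"
  proof -
    have "comm_bracket X Y = Dm p \<phi> (pbr p (par X) (par Y))"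
      using DerF_char[OF X p nom] DerF_char[OF Y p nom] Dm_br[OF p] by metis
    then have "?f (comm_bracket X Y) = Dm p \<phi>' (par (Dm p \<phi> (pbr p (par X) (par Y))))" by simp
    also have "\<dots> = Dm p \<phi>' (pbr p (par X) (par Y))" by (rule Dm_peq[OF par_Dm[OF p]])
    also have "\<dots> = comm_bracket (?f X) (?f Y)" by (simp add: Dm_br[OF p])
    finally show ?thesis .
  qed
next
  fix c X assume "X \<in> DerF p \<phi>"
  show "Dm p \<phi>' (par (fun_sc vsc c X)) = fun_sc vsc c (Dm p \<phi>' (par X))"
    by (simp add: par_sc Dm_sc)
qed


lemma cspan_sub:
  fixes sc :: "complex \<Rightarrow> 'a::ab_group_add \<Rightarrow> 'a"
  assumes "S \<subseteq> M" "0 \<in> M" "\<And>x y. x \<in> M \<Longrightarrow> y \<in> M \<Longrightarrow> x + y \<in> M" "\<And>c x. x \<in> M \<Longrightarrow> sc c x \<in> M"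
  shows "cspan sc S \<subseteq> M"
proof
  fix x assume "x \<in> cspan sc S"
  then obtain n :: nat and c v where v: "\<forall>i<n. v i \<in> S" and x: "x = (\<Sum>i<n. sc (c i) (v i))"
    unfolding cspan_def by blast
  have "(\<Sum>i<m. sc (c i) (v i)) \<in> M" if "m \<le> n" for m
    using that
  proof (induction m)
    case 0 then show ?case using assms(2) by simp
  next
    case (Suc m)
    then have "v m \<in> M" using v assms(1) by auto
    then show ?case using Suc assms(3,4) by simp
  qed
  then show "x \<in> M" using x by simp
qed

lemma cspan_sup:
  fixes sc :: "complex \<Rightarrow> 'a::ab_group_add \<Rightarrow> 'a"
  assumes "\<And>x. sc 1 x = x"
  shows "S \<subseteq> cspan sc S"
proof
  fix x assume "x \<in> S"
  then show "x \<in> cspan sc S" unfolding cspan_def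
    by (intro CollectI exI[of _ 1] exI[of _ "\<lambda>_. 1"] exI[of _ "\<lambda>_. x"]) (simp add: assms)
qed

lemma zero_cspan: "0 \<in> cspan sc S"
  unfolding cspan_def by (intro CollectI exI[of _ 0]) simp

lemma fun_sc_one: "fun_sc vsc 1 X = X"
  by (simp add: fun_sc_def vsc_def)

definition Hs :: "nat \<Rightarrow> (nat \<Rightarrow> complex) \<Rightarrow> ((nat \<Rightarrow> complex) \<Rightarrow> nat \<Rightarrow> complex) set" where
  "Hs p \<phi> = {Dm p \<phi> P | P. pa P = 0 \<and> (\<forall>k\<in>{1..p-1}. pb P k = 0)}"

definition Zs :: "nat \<Rightarrow> (nat \<Rightarrow> complex) \<Rightarrow> ((nat \<Rightarrow> complex) \<Rightarrow> nat \<Rightarrow> complex) set" where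
  "Zs p \<phi> = {Dm p \<phi> P | P. pa P = 0 \<and> (\<forall>k\<in>{1..p-1}. pb P k = 0 \<and> pd P k = 0 \<and> pe P k = 0)}"

lemma Hs_closed:
  shows "0 \<in> Hs p \<phi>" "x \<in> Hs p \<phi> \<Longrightarrow> y \<in> Hs p \<phi> \<Longrightarrow> x + y \<in> Hs p \<phi>"
    "x \<in> Hs p \<phi> \<Longrightarrow> fun_sc vsc c x \<in> Hs p \<phi>"
proof -
  show "0 \<in> Hs p \<phi>" unfolding Hs_def using Dm_P0[of p \<phi>] by (auto simp: P0_def intro!: exI[of _ P0])
  show "x \<in> Hs p \<phi> \<Longrightarrow> y \<in> Hs p \<phi> \<Longrightarrow> x + y \<in> Hs p \<phi>"
    unfolding Hs_def by (auto simp: Dm_add padd_def)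
  show "x \<in> Hs p \<phi> \<Longrightarrow> fun_sc vsc c x \<in> Hs p \<phi>"
    unfolding Hs_def by (auto simp: Dm_sc psc_def)
qed

lemma Zs_closed:
  shows "0 \<in> Zs p \<phi>" "x \<in> Zs p \<phi> \<Longrightarrow> y \<in> Zs p \<phi> \<Longrightarrow> x + y \<in> Zs p \<phi>"
    "x \<in> Zs p \<phi> \<Longrightarrow> fun_sc vsc c x \<in> Zs p \<phi>"
proof -
  show "0 \<in> Zs p \<phi>" unfolding Zs_def using Dm_P0[of p \<phi>] by (auto simp: P0_def intro!: exI[of _ P0])
  show "x \<in> Zs p \<phi> \<Longrightarrow> y \<in> Zs p \<phi> \<Longrightarrow> x + y \<in> Zs p \<phi>"
    unfolding Zs_def by (auto simp: Dm_add padd_def)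
  show "x \<in> Zs p \<phi> \<Longrightarrow> fun_sc vsc c x \<in> Zs p \<phi>"
    unfolding Zs_def by (auto simp: Dm_sc psc_def)
qed

context
  fixes p \<phi>
  assumes p: "p \<ge> 2" and nom: "\<not> in_Omega1 p \<phi>"
begin

lemma p1: "p \<ge> 1" using p by simp

lemma ds1: "derived_series (DerF p \<phi>) comm_bracket (fun_sc vsc) (Suc 0) = Hs p \<phi>"
proof -
  let ?S = "{comm_bracket x y | x y. x \<in> DerF p \<phi> \<and> y \<in> DerF p \<phi>}"
  have "?S \<subseteq> Hs p \<phi>"
  proof
    fix z assume "z \<in> ?S"
    then obtain x y where z: "z = comm_bracket x y" and x: "x \<in> DerF p \<phi>" and y: "y \<in> DerF p \<phi>" by blast
    have "z = Dm p \<phi> (pbr p (par x) (par y))"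
      using z DerF_char[OF x p1 nom] DerF_char[OF y p1 nom] Dm_br[OF p1] by metis
    then show "z \<in> Hs p \<phi>" unfolding Hs_def by (auto simp: pbr_def)
  qed
  then have A: "cspan (fun_sc vsc) ?S \<subseteq> Hs p \<phi>"
    by (rule cspan_sub) (auto intro: Hs_closed)
  have "Hs p \<phi> \<subseteq> ?S"
  proof
    fix z assume "z \<in> Hs p \<phi>"
    then obtain P where z: "z = Dm p \<phi> P" and P: "pa P = 0" "\<forall>k\<in>{1..p-1}. pb P k = 0"
      unfolding Hs_def by blast
    define R where "R = Prm 1 0 (\<lambda>_. 2) (\<lambda>_. 0) (\<lambda>_. 0)"
    define Q where "Q = Prm 0 (pal P) (\<lambda>_. 0) (\<lambda>k. - pd P k) (\<lambda>k. pe P k / 2)"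
    have "peq p (pbr p R Q) P" using P unfolding peq_def pbr_def R_def Q_def by auto
    then have "z = comm_bracket (Dm p \<phi> R) (Dm p \<phi> Q)"
      using z Dm_br[OF p1] Dm_peq by metis
    then show "z \<in> ?S" using Dm_in_DerF[OF p1] by blast
  qed
  then have B: "Hs p \<phi> \<subseteq> cspan (fun_sc vsc) ?S"
    using cspan_sup[of "fun_sc vsc" ?S] fun_sc_one by blast
  show ?thesis using A B by simp
qed

lemma ds2: "derived_series (DerF p \<phi>) comm_bracket (fun_sc vsc) (Suc (Suc 0)) = Zs p \<phi>"
proof -
  let ?S = "{comm_bracket x y | x y. x \<in> Hs p \<phi> \<and> y \<in> Hs p \<phi>}"
  have "?S \<subseteq> Zs p \<phi>"
  proof
    fix z assume "z \<in> ?S"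
    then obtain x y where z: "z = comm_bracket x y" and x: "x \<in> Hs p \<phi>" and y: "y \<in> Hs p \<phi>" by blast
    obtain P where xP: "x = Dm p \<phi> P" and P: "pa P = 0" "\<forall>k\<in>{1..p-1}. pb P k = 0"
      using x unfolding Hs_def by blast
    obtain Q where yQ: "y = Dm p \<phi> Q" and Q: "pa Q = 0" "\<forall>k\<in>{1..p-1}. pb Q k = 0"
      using y unfolding Hs_def by blast
    have "z = Dm p \<phi> (pbr p P Q)" using z xP yQ Dm_br[OF p1] by metis
    then show "z \<in> Zs p \<phi>" unfolding Zs_def using P Q by (auto simp: pbr_def)
  qed
  then have A: "cspan (fun_sc vsc) ?S \<subseteq> Zs p \<phi>"
    by (rule cspan_sub) (auto intro: Zs_closed)
  have "Zs p \<phi> \<subseteq> ?S"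
  proof
    fix z assume "z \<in> Zs p \<phi>"
    then obtain P where z: "z = Dm p \<phi> P" and P: "pa P = 0" "\<forall>k\<in>{1..p-1}. pb P k = 0 \<and> pd P k = 0 \<and> pe P k = 0"
      unfolding Zs_def by blast
    define Y where "Y = Prm 0 0 (\<lambda>_. 0) (\<lambda>k. if k = 1 then 1 else 0) (\<lambda>_. 0)"
    define X where "X = Prm 0 0 (\<lambda>_. 0) (\<lambda>_. 0) (\<lambda>k. if k = 1 then pal P else 0)"
    have "peq p (pbr p Y X) P" using P p unfolding peq_def pbr_def Y_def X_def by auto
    then have "z = comm_bracket (Dm p \<phi> Y) (Dm p \<phi> X)"
      using z Dm_br[OF p1] Dm_peq by metis
    moreover have "Dm p \<phi> Y \<in> Hs p \<phi>" "Dm p \<phi> X \<in> Hs p \<phi>"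
      unfolding Hs_def Y_def X_def by auto
    ultimately show "z \<in> ?S" by blast
  qed
  then have B: "Zs p \<phi> \<subseteq> cspan (fun_sc vsc) ?S"
    using cspan_sup[of "fun_sc vsc" ?S] fun_sc_one by blast
  show ?thesis using A B ds1 by simp
qed

lemma ds3: "derived_series (DerF p \<phi>) comm_bracket (fun_sc vsc) (Suc (Suc (Suc 0))) = {0}"
proof -
  let ?S = "{comm_bracket x y | x y. x \<in> Zs p \<phi> \<and> y \<in> Zs p \<phi>}"
  have "?S \<subseteq> {0}"
  proof
    fix z assume "z \<in> ?S"
    then obtain x y where z: "z = comm_bracket x y" and x: "x \<in> Zs p \<phi>" and y: "y \<in> Zs p \<phi>" by blast
    obtain P where xP: "x = Dm p \<phi> P" and P: "pa P = 0" "\<forall>k\<in>{1..p-1}. pb P k = 0 \<and> pd P k = 0 \<and> pe P k = 0"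
      using x unfolding Zs_def by blast
    obtain Q where yQ: "y = Dm p \<phi> Q" and Q: "pa Q = 0" "\<forall>k\<in>{1..p-1}. pb Q k = 0 \<and> pd Q k = 0 \<and> pe Q k = 0"
      using y unfolding Zs_def by blast
    have "z = Dm p \<phi> (pbr p P Q)" using z xP yQ Dm_br[OF p1] by metis
    moreover have "peq p (pbr p P Q) P0" using P Q unfolding peq_def pbr_def P0_def by (auto intro: sum.neutral)
    ultimately show "z \<in> {0}" using Dm_peq Dm_P0 by (metis singletonI)
  qed
  then have A: "cspan (fun_sc vsc) ?S \<subseteq> {0}"
    by (rule cspan_sub) (auto simp: fun_sc_def vsc_def zero_fun_def)
  show ?thesis using A zero_cspan ds2 by auto
qed

lemma derived_len: "has_derived_length (DerF p \<phi>) comm_bracket (fun_sc vsc) 3"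
proof -
  have ne: "Zs p \<phi> \<noteq> {0}"
  proof
    assume a: "Zs p \<phi> = {0}"
    define Z where "Z = Prm 0 1 (\<lambda>_. 0) (\<lambda>_. 0) (\<lambda>_. 0)"
    have "Dm p \<phi> Z \<in> Zs p \<phi>" unfolding Zs_def Z_def by auto
    then have "Dm p \<phi> Z = 0" using a by auto
    then have "Dm p \<phi> Z (unitv 2) 1 = 0" by simp
    moreover have "Dm p \<phi> Z (unitv 2) 1 = 1" using p by (simp add: Dm_def Z_def unitv_apply)
    ultimately show False by simp
  qed
  show ?thesis unfolding has_derived_length_def
    using ds3 ds2 ne by (simp add: numeral_3_eq_3 numeral_2_eq_2)
qed

end


definition psum :: "(nat \<Rightarrow> prm) \<Rightarrow> nat set \<Rightarrow> prm" where
  "psum f S = Prm (\<Sum>k\<in>S. pa (f k)) (\<Sum>k\<in>S. pal (f k)) (\<lambda>j. \<Sum>k\<in>S. pb (f k) j) (\<lambda>j. \<Sum>k\<in>S. pd (f k) j) (\<lambda>j. \<Sum>k\<in>S. pe (f k) j)"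

lemma psum_empty: "psum f {} = P0"
  by (simp add: psum_def P0_def)

lemma psum_insert: "finite S \<Longrightarrow> a \<notin> S \<Longrightarrow> psum f (insert a S) = padd (f a) (psum f S)"
  by (simp add: psum_def padd_def)

lemma padd_peq: "peq p P P' \<Longrightarrow> peq p Q Q' \<Longrightarrow> peq p (padd P Q) (padd P' Q')"
  by (simp add: peq_def padd_def)

lemma psc_peq: "peq p P P' \<Longrightarrow> peq p (psc c P) (psc c P')"
  by (simp add: peq_def psc_def)

lemma psum_peq: "(\<And>k. k \<in> S \<Longrightarrow> peq p (f k) (g k)) \<Longrightarrow> peq p (psum f S) (psum g S)"
  unfolding peq_def psum_def by (auto intro!: sum.cong)

lemma pbr_padd: "pbr p A (padd P Q) = padd (pbr p A P) (pbr p A Q)"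
  by (simp add: pbr_def padd_def algebra_simps sum.distrib sum_subtractf)

lemma pbr_psc: "pbr p A (psc c P) = psc c (pbr p A P)"
  by (simp add: pbr_def psc_def algebra_simps sum_distrib_left sum_subtractf)

lemma pbr_P0: "pbr p A P0 = P0"
  by (simp add: pbr_def P0_def)

lemma pbr_psum: "finite S \<Longrightarrow> pbr p A (psum f S) = psum (\<lambda>k. pbr p A (f k)) S"
  by (induction S rule: finite_induct) (simp_all add: psum_empty psum_insert pbr_P0 pbr_padd)

definition ind :: "nat \<Rightarrow> nat \<Rightarrow> complex" where "ind j = (\<lambda>k. if k = j then 1 else 0)"
definition T0 :: prm where "T0 = Prm 1 0 (\<lambda>_. 0) (\<lambda>_. 0) (\<lambda>_. 0)"
definition Tj :: "nat \<Rightarrow> prm" where "Tj j = Prm 0 0 (ind j) (\<lambda>_. 0) (\<lambda>_. 0)"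
definition Zp :: prm where "Zp = Prm 0 1 (\<lambda>_. 0) (\<lambda>_. 0) (\<lambda>_. 0)"
definition Yk :: "nat \<Rightarrow> prm" where "Yk j = Prm 0 0 (\<lambda>_. 0) (ind j) (\<lambda>_. 0)"
definition Xk :: "nat \<Rightarrow> prm" where "Xk j = Prm 0 0 (\<lambda>_. 0) (\<lambda>_. 0) (ind j)"

definition decomp :: "nat \<Rightarrow> prm \<Rightarrow> prm" where
  "decomp p P = padd (psc (pa P) T0) (padd (psc (pal P) Zp)
     (psum (\<lambda>k. padd (psc (pb P k) (Tj k)) (padd (psc (pd P k) (Yk k)) (psc (pe P k) (Xk k)))) {1..p-1}))"

lemma decomp_peq: "peq p P (decomp p P)"
  unfolding peq_def decomp_def
  by (simp add: padd_def psc_def psum_def T0_def Tj_def Zp_def Yk_def Xk_def ind_def)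


context
  fixes p \<phi> \<Delta>
  assumes p: "p \<ge> 2" and nom: "\<not> in_Omega1 p \<phi>"
    and Dl: "\<Delta> \<in> derivations (DerF p \<phi>) comm_bracket (fun_sc vsc)"
begin

lemma p1': "p \<ge> 1" using p by simp

lemma Dl_in: "X \<in> DerF p \<phi> \<Longrightarrow> \<Delta> X \<in> DerF p \<phi>"
  using Dl unfolding derivations_def by blast
lemma Dl_add: "X \<in> DerF p \<phi> \<Longrightarrow> Y \<in> DerF p \<phi> \<Longrightarrow> \<Delta> (X + Y) = \<Delta> X + \<Delta> Y"
  using Dl unfolding derivations_def by blast
lemma Dl_sc: "X \<in> DerF p \<phi> \<Longrightarrow> \<Delta> (fun_sc vsc c X) = fun_sc vsc c (\<Delta> X)"
  using Dl unfolding derivations_def by blast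
lemma Dl_leib: "X \<in> DerF p \<phi> \<Longrightarrow> Y \<in> DerF p \<phi> \<Longrightarrow> \<Delta> (comm_bracket X Y) = comm_bracket (\<Delta> X) Y + comm_bracket X (\<Delta> Y)"
  using Dl unfolding derivations_def by blast
lemma Dl_out: "X \<notin> DerF p \<phi> \<Longrightarrow> \<Delta> X = 0"
  using Dl unfolding derivations_def by blast

definition Gm :: "prm \<Rightarrow> prm" where "Gm P = par (\<Delta> (Dm p \<phi> P))"

lemma Dm_in: "Dm p \<phi> P \<in> DerF p \<phi>" using Dm_in_DerF[OF p1'] .

lemma Dl_Dm: "\<Delta> (Dm p \<phi> P) = Dm p \<phi> (Gm P)"
  unfolding Gm_def using DerF_char[OF Dl_in[OF Dm_in] p1' nom] .

lemma Gm_add: "Gm (padd P Q) = padd (Gm P) (Gm Q)"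
  unfolding Gm_def Dm_add[symmetric] by (simp add: Dl_add[OF Dm_in Dm_in] par_add)

lemma Gm_sc: "Gm (psc c P) = psc c (Gm P)"
  unfolding Gm_def Dm_sc[symmetric] by (simp add: Dl_sc[OF Dm_in] par_sc)

lemma Gm_peq: "peq p P Q \<Longrightarrow> Gm P = Gm Q"
  unfolding Gm_def using Dm_peq by metis

lemma Dl_zero: "\<Delta> 0 = 0"
proof -
  have z: "0 \<in> DerF p \<phi>" using DerF_zero[OF p1'] .
  have "\<Delta> (0 + 0) = \<Delta> 0 + \<Delta> 0" by (rule Dl_add[OF z z])
  then show ?thesis by simp
qed

lemma Gm_P0: "Gm P0 = P0"
  unfolding Gm_def Dm_P0 Dl_zero by (simp add: par_def P0_def)

lemma Gm_psum: "finite S \<Longrightarrow> Gm (psum f S) = psum (\<lambda>k. Gm (f k)) S"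
  by (induction S rule: finite_induct) (simp_all add: psum_empty psum_insert Gm_P0 Gm_add)

lemma relG:
  assumes "peq p (pbr p U V) W"
  shows "peq p (Gm W) (padd (pbr p (Gm U) V) (pbr p U (Gm V)))"
proof -
  have "Dm p \<phi> (Gm W) = \<Delta> (Dm p \<phi> W)" by (simp add: Dl_Dm)
  also have "\<dots> = \<Delta> (comm_bracket (Dm p \<phi> U) (Dm p \<phi> V))"
    using Dm_peq[OF assms] Dm_br[OF p1'] by metis
  also have "\<dots> = comm_bracket (Dm p \<phi> (Gm U)) (Dm p \<phi> V) + comm_bracket (Dm p \<phi> U) (Dm p \<phi> (Gm V))"
    by (simp add: Dl_leib[OF Dm_in Dm_in] Dl_Dm)
  also have "\<dots> = Dm p \<phi> (padd (pbr p (Gm U) V) (pbr p U (Gm V)))"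
    by (simp add: Dm_br[OF p1'] Dm_add)
  finally show ?thesis using Dm_eq_iff[OF p1'] by blast
qed

lemmas bdefs = padd_def pbr_def T0_def Tj_def Zp_def Yk_def Xk_def ind_def P0_def

lemma peqD: "peq p P Q \<Longrightarrow> pa P = pa Q" "peq p P Q \<Longrightarrow> pal P = pal Q"
  "peq p P Q \<Longrightarrow> k \<in> {1..p-1} \<Longrightarrow> pb P k = pb Q k"
  "peq p P Q \<Longrightarrow> k \<in> {1..p-1} \<Longrightarrow> pd P k = pd Q k"
  "peq p P Q \<Longrightarrow> k \<in> {1..p-1} \<Longrightarrow> pe P k = pe Q k"
  by (auto simp: peq_def)

lemma R1: "pa (Gm T0) = 0" "pa (Gm Zp) = 0" "k \<in> {1..p-1} \<Longrightarrow> pb (Gm Zp) k = 0" "k \<in> {1..p-1} \<Longrightarrow> pe (Gm Zp) k = 0"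
proof -
  have "peq p (pbr p T0 Zp) Zp" by (simp add: bdefs peq_def)
  note h = relG[OF this]
  show "pa (Gm T0) = 0" using peqD(2)[OF h] by (simp add: bdefs)
  show "pa (Gm Zp) = 0" using peqD(1)[OF h] by (simp add: bdefs)
  show "k \<in> {1..p-1} \<Longrightarrow> pb (Gm Zp) k = 0" using peqD(3)[OF h] by (simp add: bdefs)
  show "k \<in> {1..p-1} \<Longrightarrow> pe (Gm Zp) k = 0" using peqD(5)[OF h] by (simp add: bdefs)
qed

lemma R2: "i \<in> {1..p-1} \<Longrightarrow> pa (Gm (Tj i)) = 0 \<and> pd (Gm Zp) i = 0"
proof -
  assume i: "i \<in> {1..p-1}"
  have "peq p (pbr p (Tj i) Zp) P0" by (simp add: bdefs peq_def)
  note h = relG[OF this, unfolded Gm_P0]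
  show ?thesis using peqD(2)[OF h] peqD(4)[OF h i] i by (simp add: bdefs)
qed

lemma R3: "j \<in> {1..p-1} \<Longrightarrow> pal (Gm (Xk j)) = - pd (Gm T0) j \<and> pb (Gm T0) j = 0 \<and> (\<forall>k\<in>{1..p-1}. pd (Gm (Xk j)) k = 0)"
proof -
  assume j: "j \<in> {1..p-1}"
  have "peq p (pbr p T0 (Xk j)) P0" by (simp add: bdefs peq_def)
  note h = relG[OF this, unfolded Gm_P0]
  show ?thesis using peqD(2)[OF h] peqD(5)[OF h j] peqD(4)[OF h] j by (simp add: bdefs add_eq_0_iff)
qed

lemma R4: "j \<in> {1..p-1} \<Longrightarrow> pe (Gm T0) j = 0 \<and> pa (Gm (Yk j)) = 0 \<and> (\<forall>k\<in>{1..p-1}. pb (Gm (Yk j)) k = 0 \<and> pe (Gm (Yk j)) k = 0)"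
proof -
  assume j: "j \<in> {1..p-1}"
  have "peq p (pbr p T0 (Yk j)) (Yk j)" by (simp add: bdefs peq_def)
  note h = relG[OF this]
  show ?thesis using peqD(1,2)[OF h] peqD(3)[OF h] peqD(5)[OF h] j by (simp add: bdefs)
qed

lemma R5: "i \<in> {1..p-1} \<Longrightarrow> pal (Gm (Tj i)) = 0 \<and> (\<forall>k\<in>{1..p-1}. pd (Gm (Tj i)) k = (if k = i then - pd (Gm T0) k else 0))"
proof -
  assume i: "i \<in> {1..p-1}"
  have "peq p (pbr p (Tj i) T0) P0" by (simp add: bdefs peq_def)
  note h = relG[OF this, unfolded Gm_P0]
  have "pal (Gm (Tj i)) = 0" using peqD(2)[OF h] by (simp add: bdefs add_eq_0_iff)
  moreover have "pd (Gm (Tj i)) k = (if k = i then - pd (Gm T0) k else 0)" if k: "k \<in> {1..p-1}" for k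
    using peqD(4)[OF h k] by (cases "k = i") (simp_all add: bdefs add_eq_0_iff)
  ultimately show ?thesis by blast
qed

lemma R6: "i \<in> {1..p-1} \<Longrightarrow> l \<in> {1..p-1} \<Longrightarrow> i \<noteq> l \<Longrightarrow> pe (Gm (Tj i)) l = 0"
proof -
  assume i: "i \<in> {1..p-1}" and l: "l \<in> {1..p-1}" and il: "i \<noteq> l"
  have "peq p (pbr p (Tj i) (Tj l)) P0" by (simp add: bdefs peq_def)
  note h = relG[OF this, unfolded Gm_P0]
  show ?thesis using peqD(5)[OF h l] il by (simp add: bdefs)
qed

lemma R7a: "i \<in> {1..p-1} \<Longrightarrow> j \<in> {1..p-1} \<Longrightarrow> i \<noteq> j \<Longrightarrow> pb (Gm (Tj i)) j = 0 \<and> pe (Gm (Xk j)) i = 0"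
proof -
  assume i: "i \<in> {1..p-1}" and j: "j \<in> {1..p-1}" and ij: "i \<noteq> j"
  have "peq p (pbr p (Tj i) (Xk j)) P0" using ij by (simp add: bdefs peq_def)
  note h = relG[OF this, unfolded Gm_P0]
  show ?thesis using peqD(5)[OF h j] peqD(5)[OF h i] ij by (simp add: bdefs)
qed

lemma R7b: "j \<in> {1..p-1} \<Longrightarrow> pb (Gm (Tj j)) j = 0 \<and> pa (Gm (Xk j)) = 0 \<and> (\<forall>k\<in>{1..p-1}. pb (Gm (Xk j)) k = 0)"
proof -
  assume j: "j \<in> {1..p-1}"
  have "peq p (pbr p (Tj j) (Xk j)) (Xk j)" by (simp add: bdefs peq_def)
  note h = relG[OF this]
  show ?thesis using peqD(5)[OF h j] peqD(1)[OF h] peqD(3)[OF h] j by (simp add: bdefs)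
qed

lemma R8a: "i \<in> {1..p-1} \<Longrightarrow> j \<in> {1..p-1} \<Longrightarrow> i \<noteq> j \<Longrightarrow> pd (Gm (Yk j)) i = 0"
proof -
  assume i: "i \<in> {1..p-1}" and j: "j \<in> {1..p-1}" and ij: "i \<noteq> j"
  have "peq p (pbr p (Tj i) (Yk j)) P0" using ij by (simp add: bdefs peq_def)
  note h = relG[OF this, unfolded Gm_P0]
  show ?thesis using peqD(4)[OF h i] ij by (simp add: bdefs)
qed

lemma R8b: "j \<in> {1..p-1} \<Longrightarrow> pal (Gm (Yk j)) = pe (Gm (Tj j)) j"
proof -
  assume j: "j \<in> {1..p-1}"
  have "peq p (pbr p (Yk j) (Tj j)) (Yk j)" by (simp add: bdefs peq_def)
  note h = relG[OF this]
  show ?thesis using peqD(2)[OF h] j by (simp add: bdefs)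
qed

lemma R9: "j \<in> {1..p-1} \<Longrightarrow> pal (Gm Zp) = pd (Gm (Yk j)) j + pe (Gm (Xk j)) j"
proof -
  assume j: "j \<in> {1..p-1}"
  have "peq p (pbr p (Yk j) (Xk j)) Zp" using j by (simp add: bdefs peq_def)
  note h = relG[OF this]
  show ?thesis using peqD(2)[OF h] j by (simp add: bdefs)
qed

lemma bsel[simp]:
  "pa T0 = 1" "pal T0 = 0" "pb T0 k = 0" "pd T0 k = 0" "pe T0 k = 0"
  "pa (Tj j) = 0" "pal (Tj j) = 0" "pb (Tj j) k = (if k = j then 1 else 0)" "pd (Tj j) k = 0" "pe (Tj j) k = 0"
  "pa Zp = 0" "pal Zp = 1" "pb Zp k = 0" "pd Zp k = 0" "pe Zp k = 0"
  "pa (Yk j) = 0" "pal (Yk j) = 0" "pb (Yk j) k = 0" "pd (Yk j) k = (if k = j then 1 else 0)" "pe (Yk j) k = 0"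
  "pa (Xk j) = 0" "pal (Xk j) = 0" "pb (Xk j) k = 0" "pd (Xk j) k = 0" "pe (Xk j) k = (if k = j then 1 else 0)"
  by (simp_all add: T0_def Tj_def Zp_def Yk_def Xk_def ind_def)

definition Aprm :: prm where
  "Aprm = Prm (pal (Gm Zp)) (- pal (Gm T0)) (\<lambda>k. pe (Gm (Xk k)) k) (\<lambda>k. - pd (Gm T0) k) (\<lambda>k. - pe (Gm (Tj k)) k)"

lemma Asel[simp]: "pa Aprm = pal (Gm Zp)" "pal Aprm = - pal (Gm T0)" "pb Aprm k = pe (Gm (Xk k)) k"
  "pd Aprm k = - pd (Gm T0) k" "pe Aprm k = - pe (Gm (Tj k)) k"
  by (simp_all add: Aprm_def)

lemma pbr_sel[simp]: "pa (pbr p P Q) = 0" "pb (pbr p P Q) k = 0"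
  "pal (pbr p P Q) = pa P * pal Q - pa Q * pal P + (\<Sum>k\<in>{1..p-1}. pd P k * pe Q k - pe P k * pd Q k)"
  "pd (pbr p P Q) k = (pa P - pb P k) * pd Q k - (pa Q - pb Q k) * pd P k"
  "pe (pbr p P Q) k = pb P k * pe Q k - pb Q k * pe P k"
  by (simp_all add: pbr_def)

lemma B0: "peq p (Gm T0) (pbr p Aprm T0)"
  unfolding peq_def using R1(1) R3 R4 by auto

lemma BT: "j \<in> {1..p-1} \<Longrightarrow> peq p (Gm (Tj j)) (pbr p Aprm (Tj j))"
proof -
  assume j: "j \<in> {1..p-1}"
  have pb: "pb (Gm (Tj j)) k = 0" if k: "k \<in> {1..p-1}" for k
  proof (cases "k = j")
    case True then show ?thesis using R7b[OF j] by simp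
  next
    case False then show ?thesis using R7a[OF j k] by simp
  qed
  have pe: "pe (Gm (Tj j)) k = (if k = j then pe (Gm (Tj k)) k else 0)" if k: "k \<in> {1..p-1}" for k
  proof (cases "k = j")
    case False then show ?thesis using R6[OF j k] by simp
  qed simp
  show ?thesis unfolding peq_def
  proof (intro conjI ballI)
    show "pa (Gm (Tj j)) = pa (pbr p Aprm (Tj j))" using R2[OF j] by simp
    show "pal (Gm (Tj j)) = pal (pbr p Aprm (Tj j))" using R5[OF j] by simp
    fix k assume k: "k \<in> {1..p-1}"
    show "pb (Gm (Tj j)) k = pb (pbr p Aprm (Tj j)) k" using pb[OF k] by simp
    show "pd (Gm (Tj j)) k = pd (pbr p Aprm (Tj j)) k" using R5[OF j] k by simp
    show "pe (Gm (Tj j)) k = pe (pbr p Aprm (Tj j)) k" using pe[OF k] by simp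
  qed
qed

lemma BZ: "peq p (Gm Zp) (pbr p Aprm Zp)"
  unfolding peq_def
proof (intro conjI ballI)
  show "pa (Gm Zp) = pa (pbr p Aprm Zp)" using R1 by simp
  show "pal (Gm Zp) = pal (pbr p Aprm Zp)" by simp
  fix k assume k: "k \<in> {1..p-1}"
  show "pb (Gm Zp) k = pb (pbr p Aprm Zp) k" using R1(3)[OF k] by simp
  show "pd (Gm Zp) k = pd (pbr p Aprm Zp) k" using R2[OF k] by simp
  show "pe (Gm Zp) k = pe (pbr p Aprm Zp) k" using R1(4)[OF k] by simp
qed

lemma BX: "j \<in> {1..p-1} \<Longrightarrow> peq p (Gm (Xk j)) (pbr p Aprm (Xk j))"
proof -
  assume j: "j \<in> {1..p-1}"
  have pe: "pe (Gm (Xk j)) k = (if k = j then pe (Gm (Xk k)) k else 0)" if k: "k \<in> {1..p-1}" for k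
  proof (cases "k = j")
    case False then show ?thesis using R7a[OF k j] by simp
  qed simp
  show ?thesis unfolding peq_def
  proof (intro conjI ballI)
    show "pa (Gm (Xk j)) = pa (pbr p Aprm (Xk j))" using R7b[OF j] by simp
    show "pal (Gm (Xk j)) = pal (pbr p Aprm (Xk j))" using R3[OF j] j by simp
    fix k assume k: "k \<in> {1..p-1}"
    show "pb (Gm (Xk j)) k = pb (pbr p Aprm (Xk j)) k" using R7b[OF j] k by simp
    show "pd (Gm (Xk j)) k = pd (pbr p Aprm (Xk j)) k" using R3[OF j] k by simp
    show "pe (Gm (Xk j)) k = pe (pbr p Aprm (Xk j)) k" using pe[OF k] by simp
  qed
qed

lemma BY: "j \<in> {1..p-1} \<Longrightarrow> peq p (Gm (Yk j)) (pbr p Aprm (Yk j))"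
proof -
  assume j: "j \<in> {1..p-1}"
  have pd: "pd (Gm (Yk j)) k = (if k = j then pal (Gm Zp) - pe (Gm (Xk k)) k else 0)" if k: "k \<in> {1..p-1}" for k
  proof (cases "k = j")
    case True then show ?thesis using R9[OF j] by simp
  next
    case False then show ?thesis using R8a[OF k j] by simp
  qed
  show ?thesis unfolding peq_def
  proof (intro conjI ballI)
    show "pa (Gm (Yk j)) = pa (pbr p Aprm (Yk j))" using R4[OF j] by simp
    show "pal (Gm (Yk j)) = pal (pbr p Aprm (Yk j))" using R8b[OF j] j by simp
    fix k assume k: "k \<in> {1..p-1}"
    show "pb (Gm (Yk j)) k = pb (pbr p Aprm (Yk j)) k" using R4[OF j] k by simp
    show "pd (Gm (Yk j)) k = pd (pbr p Aprm (Yk j)) k" using pd[OF k] by simp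
    show "pe (Gm (Yk j)) k = pe (pbr p Aprm (Yk j)) k" using R4[OF j] k by simp
  qed
qed

lemma Gm_agree: "peq p (Gm P) (pbr p Aprm P)"
proof -
  let ?G = "padd (psc (pa P) (Gm T0)) (padd (psc (pal P) (Gm Zp)) (psum (\<lambda>k. padd (psc (pb P k) (Gm (Tj k))) (padd (psc (pd P k) (Gm (Yk k))) (psc (pe P k) (Gm (Xk k))))) {1..p-1}))"
  let ?B = "padd (psc (pa P) (pbr p Aprm T0)) (padd (psc (pal P) (pbr p Aprm Zp)) (psum (\<lambda>k. padd (psc (pb P k) (pbr p Aprm (Tj k))) (padd (psc (pd P k) (pbr p Aprm (Yk k))) (psc (pe P k) (pbr p Aprm (Xk k))))) {1..p-1}))"
  have "Gm P = Gm (decomp p P)" by (rule Gm_peq[OF decomp_peq])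
  also have "\<dots> = ?G" by (simp add: decomp_def Gm_add Gm_sc Gm_psum)
  finally have g: "Gm P = ?G" .
  have b: "pbr p Aprm (decomp p P) = ?B" by (simp add: decomp_def pbr_padd pbr_psc pbr_psum)
  have "peq p ?G ?B"
    by (intro padd_peq psc_peq psum_peq B0 BZ BT BX BY) auto
  moreover have "peq p (pbr p Aprm (decomp p P)) (pbr p Aprm P)"
    by (rule pbr_peq[OF peq_refl peq_sym[OF decomp_peq]])
  ultimately show ?thesis using g b peq_trans by metis
qed

lemma Dl_inner: "\<Delta> = inner_derivation (DerF p \<phi>) comm_bracket (Dm p \<phi> Aprm)"
proof (rule ext)
  fix X
  show "\<Delta> X = inner_derivation (DerF p \<phi>) comm_bracket (Dm p \<phi> Aprm) X"
  proof (cases "X \<in> DerF p \<phi>")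
    case True
    have X: "X = Dm p \<phi> (par X)" by (rule DerF_char[OF True p1' nom])
    have "\<Delta> X = Dm p \<phi> (Gm (par X))" using X Dl_Dm by metis
    also have "\<dots> = Dm p \<phi> (pbr p Aprm (par X))" by (rule Dm_peq[OF Gm_agree])
    also have "\<dots> = comm_bracket (Dm p \<phi> Aprm) X" using X Dm_br[OF p1'] by metis
    finally show ?thesis using True by (simp add: inner_derivation_def)
  next
    case False
    then show ?thesis by (simp add: inner_derivation_def Dl_out)
  qed
qed

end

lemma lie_center_triv:
  assumes p: "p \<ge> 1" and nom: "\<not> in_Omega1 p \<phi>"
  shows "lie_center (DerF p \<phi>) comm_bracket = {0}"
proof
  show "{0} \<subseteq> lie_center (DerF p \<phi>) comm_bracket"
  proof -
    have "comm_bracket 0 x = 0" if x: "x \<in> DerF p \<phi>" for x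
    proof -
      have "x 0 = 0" using der_zero[OF DerF_der[OF x]] .
      then show ?thesis by (simp add: comm_bracket_def fun_eq_iff)
    qed
    then show ?thesis unfolding lie_center_def using DerF_zero[OF p] by auto
  qed
  show "lie_center (DerF p \<phi>) comm_bracket \<subseteq> {0}"
  proof
    fix z assume z: "z \<in> lie_center (DerF p \<phi>) comm_bracket"
    then have zD: "z \<in> DerF p \<phi>" and zc: "\<And>x. x \<in> DerF p \<phi> \<Longrightarrow> comm_bracket z x = 0"
      unfolding lie_center_def by auto
    define P where "P = par z"
    have zP: "z = Dm p \<phi> P" unfolding P_def by (rule DerF_char[OF zD p nom])
    have c: "peq p (pbr p P Q) P0" for Q
    proof -
      have "Dm p \<phi> (pbr p P Q) = 0" using zc[OF Dm_in_DerF[OF p]] zP Dm_br[OF p] by metis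
      then show ?thesis using Dm_eq_iff[OF p] Dm_P0 by metis
    qed
    define R where "R = Prm 1 0 (\<lambda>_. 2) (\<lambda>_. 0) (\<lambda>_. 0)"
    define E where "E = Prm 0 0 (\<lambda>_. 0) (\<lambda>_. 0) (\<lambda>_. 1)"
    have c1: "pal P = 0" and c2: "\<forall>k\<in>{1..p-1}. pd P k = 0 \<and> pe P k = 0"
      using c[of R] unfolding peq_def pbr_def R_def P0_def by auto
    have c3: "pa P = 0" using c[of Zp] c2 unfolding peq_def pbr_def Zp_def P0_def by auto
    have c4: "\<forall>k\<in>{1..p-1}. pb P k = 0" using c[of E] unfolding peq_def pbr_def E_def P0_def by auto
    have "peq p P P0" using c1 c2 c3 c4 unfolding peq_def P0_def by auto
    then have "z = 0" using zP Dm_peq Dm_P0 by metis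
    then show "z \<in> {0}" by simp
  qed
qed

theorem theorem2:
  fixes p :: nat and \<phi> \<phi>' :: "nat \<Rightarrow> complex"
  assumes "p \<ge> 2"
    and "\<not> in_Omega1 p \<phi>"
    and "\<not> in_Omega1 p \<phi>'"
  shows "has_derived_length (DerF p \<phi>) comm_bracket (fun_sc vsc) 3
       \<and> complete_lie (DerF p \<phi>) comm_bracket (fun_sc vsc)
       \<and> lie_isomorphic (DerF p \<phi>) comm_bracket (fun_sc vsc)
                        (DerF p \<phi>') comm_bracket (fun_sc vsc)"
proof (intro conjI)
  have p1: "p \<ge> 1" using assms(1) by simp
  show "has_derived_length (DerF p \<phi>) comm_bracket (fun_sc vsc) 3"
    by (rule derived_len[OF assms(1,2)])
  show "lie_isomorphic (DerF p \<phi>) comm_bracket (fun_sc vsc) (DerF p \<phi>') comm_bracket (fun_sc vsc)"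
    by (rule theorem_iso[OF p1 assms(2,3)])
  show "complete_lie (DerF p \<phi>) comm_bracket (fun_sc vsc)"
    unfolding complete_lie_def
  proof (intro conjI ballI)
    show "lie_center (DerF p \<phi>) comm_bracket = {0}" by (rule lie_center_triv[OF p1 assms(2)])
    fix d assume d: "d \<in> derivations (DerF p \<phi>) comm_bracket (fun_sc vsc)"
    show "\<exists>a\<in>DerF p \<phi>. d = inner_derivation (DerF p \<phi>) comm_bracket a"
      using Dl_inner[OF assms(1,2) d] Dm_in_DerF[OF p1] by blast
  qed
qed


end
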